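(* Let $X$ be a bounded chain and $H\colon X^*\to X\cup\{\varepsilon\}$ an $\varepsilon$-standard operation. The following are equivalent. (i) (a) $H$ is associative; (b) $H_2(H_1(x),H_1(x))=H_1(x)$ for every $x\in X$; (c) $H_1$ and $H_2$ are nondecreasing in each argument; (d) the sets $H_1(X)$, $H_2(X,z)=\{H_2(x,z):x\in X\}$ and $H_2(z,X)=\{H_2(z,x):x\in X\}$ are convex for every $z\in X$. (ii) (a) $H$ is associative; (b) $H$ is range-idempotent; (c) for every $n\geqslant 1$, $H_n$ is nondecreasing in each argument; (d) for every $n\geqslant 1$, every $0\leqslant i\leqslant n-1$, every $\mathbf{y}\in X^i$ and $\mathbf{z}\in X^{n-1-i}$, the set $\{H_n(\mathbf{y},x,\mathbf{z}):x\in X\}$ is convex. (iii) There exist $a,b,c,d\in X$ with $a\leqslant c\wedge d$ and $c\vee d\leqslant b$ such that for every $n\geqslant 1$, $$H_n(x_1,\ldots,x_n)=\mathrm{med}\Big(a,\,(c\wedge x_1)\vee\mathrm{med}\Big(\bigwedge_{i=1}^n x_i,\,c\wedge d,\,\bigvee_{i=1}^n x_i\Big)\vee(d\wedge x_n),\,b\Big).$$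
   Context: $X^*=\bigcup_{n\geqslant 0}X^n$ is the set of finite tuples over $X$, $X^0=\{\varepsilon\}$ with $\varepsilon\notin X$ the empty tuple; $H(\mathbf{x},\mathbf{y})$ denotes $H$ applied to the concatenation, concatenation with $\varepsilon$ leaving tuples unchanged. $H_n=H|_{X^n}$, $H^{\flat}=H|_{X^*\setminus\{\varepsilon\}}$. $H$ is $\varepsilon$-standard if $H(\varepsilon)=\varepsilon$ and $H(\mathbf{x})\neq\varepsilon$ for $\mathbf{x}\neq\varepsilon$. $H$ is associative if $H(\mathbf{x},\mathbf{y},\mathbf{z})=H(\mathbf{x},H(\mathbf{y}),\mathbf{z})$ for all tuples (a value $\varepsilon$ treated as the empty tuple). $H$ is range-idempotent if $H(x,\ldots,x)=x$ ($k$ copies) for every $x\in\mathrm{ran}(H^{\flat})$ and every $k\geqslant 1$. In the chain $X$, $\wedge$ and $\vee$ denote min and max, and $\mathrm{med}(x,y,z)=(x\vee y)\wedge(y\vee z)\wedge(z\vee x)$. A subset $S$ of a chain is convex if $s,s'\in S$ and $s<t<s'$ imply $t\in S$. *)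

theory Defs
  imports Main
begin

text \<open>Tuples over X are lists; the value epsilon is None, so an operation
  H : X* -> X + {eps} is a function 'a list => 'a option.\<close>

definition opt_list :: "'a option \<Rightarrow> 'a list" where
  "opt_list v = (case v of None \<Rightarrow> [] | Some a \<Rightarrow> [a])"

definition eps_standard :: "('a list \<Rightarrow> 'a option) \<Rightarrow> bool" where
  "eps_standard H \<longleftrightarrow> H [] = None \<and> (\<forall>xs. xs \<noteq> [] \<longrightarrow> H xs \<noteq> None)"

definition associative_op :: "('a list \<Rightarrow> 'a option) \<Rightarrow> bool" where
  "associative_op H \<longleftrightarrow>
     (\<forall>xs ys zs. H (xs @ ys @ zs) = H (xs @ opt_list (H ys) @ zs))"

definition range_idempotent :: "('a list \<Rightarrow> 'a option) \<Rightarrow> bool" where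
  "range_idempotent H \<longleftrightarrow>
     (\<forall>x \<in> {v. \<exists>xs. xs \<noteq> [] \<and> H xs = Some v}. \<forall>k\<ge>1. H (replicate k x) = Some x)"

text \<open>H_n nondecreasing in each argument (values compared in X; for an
  eps-standard H all values on nonempty tuples lie in X).\<close>
definition nondecr_n :: "('a::linorder list \<Rightarrow> 'a option) \<Rightarrow> nat \<Rightarrow> bool" where
  "nondecr_n H n \<longleftrightarrow>
     (\<forall>ys zs x x'. length ys + 1 + length zs = n \<longrightarrow> x \<le> x' \<longrightarrow>
        the (H (ys @ [x] @ zs)) \<le> the (H (ys @ [x'] @ zs)))"

definition chain_convex :: "'a::linorder set \<Rightarrow> bool" where
  "chain_convex S \<longleftrightarrow> (\<forall>s\<in>S. \<forall>s'\<in>S. \<forall>t. s < t \<and> t < s' \<longrightarrow> t \<in> S)"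

definition med :: "'a::linorder \<Rightarrow> 'a \<Rightarrow> 'a \<Rightarrow> 'a" where
  "med x y z = min (min (max x y) (max y z)) (max z x)"

end

theory Submission
  imports Defs
begin


definition Phi :: "'a::linorder \<Rightarrow> 'a \<Rightarrow> 'a \<Rightarrow> 'a \<Rightarrow> 'a list \<Rightarrow> 'a" where
  "Phi a b c d xs = med a (max (max (min c (hd xs)) (med (Min (set xs)) (min c d) (Max (set xs)))) (min d (last xs))) b"

lemma med_xx[simp]: "med x e x = (x::'a::linorder)"
  unfolding med_def by (metis max.commute max.idem min.absorb2 min.cobounded1 max.cobounded1 min.commute)

lemma Phi_single[simp]: "Phi a b c d [x] = med a x b"
  by (simp add: Phi_def)

lemma Phi_pair: "Phi a b c d [u,y] = med a (max (max (min c u) (med (min u y) (min c d) (max u y))) (min d y)) b"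
  by (simp add: Phi_def)

lemma Phi_rev: "xs \<noteq> [] \<Longrightarrow> Phi a b c d (rev xs) = Phi a b d c xs"
  by (simp add: Phi_def hd_rev last_rev min.commute max.commute max.left_commute)

lemma med_idem: "(a::'a::linorder) \<le> b \<Longrightarrow> med a (med a z b) b = med a z b"
  unfolding med_def by (auto simp: min_def max_def)

lemma med_clamp: "(a::'a::linorder) \<le> b \<Longrightarrow> med a x b = max a (min x b)"
  unfolding med_def by (auto simp: min_def max_def)

lemma Phi_gl:
  fixes a b c d x y :: "'a::linorder"
  assumes "a \<le> min c d" "max c d \<le> b"
  shows "Phi a b c d [med a x b, y] = Phi a b c d [x, y]"
  using assms unfolding Phi_pair med_def
  by (smt (verit) min_def max_def order_trans linear order_antisym)

lemma Phi_gr: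
  fixes a b c d x y :: "'a::linorder"
  assumes "a \<le> min c d" "max c d \<le> b"
  shows "Phi a b c d [x, med a y b] = Phi a b c d [x, y]"
  using assms unfolding Phi_pair med_def
  by (smt (verit) min_def max_def order_trans linear order_antisym)

lemma Phi_closed:
  fixes a b c d x y :: "'a::linorder"
  assumes "a \<le> min c d" "max c d \<le> b"
  shows "Phi a b c d [x, y] = (let u = med a x b; v = med a y b in if u \<le> v then med u d v else med v c u)"
  using assms unfolding Phi_pair med_def Let_def
  by (smt (verit) min_def max_def order_trans linear order_antisym)

lemma Phi_RL:
  fixes a b c d q t :: "'a::{linorder,order_bot,order_top}"
  assumes "a \<le> min c d" "max c d \<le> b" "Phi a b c d [bot, q] \<le> t" "t \<le> Phi a b c d [top, q]"
  shows "Phi a b c d [t, q] = t"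
  using assms unfolding Phi_pair med_def
  by (smt (verit) min_def max_def order_trans linear order_antisym bot_least top_greatest)

lemma Phi_RR:
  fixes a b c d p t :: "'a::{linorder,order_bot,order_top}"
  assumes "a \<le> min c d" "max c d \<le> b" "Phi a b c d [p, bot] \<le> t" "t \<le> Phi a b c d [p, top]"
  shows "Phi a b c d [p, t] = t"
  using assms unfolding Phi_pair med_def
  by (smt (verit) min_def max_def order_trans linear order_antisym bot_least top_greatest)



lemma idn:
  fixes a b c d h l mn mx y u :: "'a::linorder"
  assumes "a \<le> c" "a \<le> d" "c \<le> b" "d \<le> b" "mn \<le> h" "h \<le> mx" "mn \<le> l" "l \<le> mx"
   and u: "u = med a (max (max (min c h) (med mn (min c d) mx)) (min d l)) b"
  shows "med a (max (max (min c h) (med (min mn y) (min c d) (max mx y))) (min d y)) b =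
   med a (max (max (min c u) (med (min u y) (min c d) (max u y))) (min d y)) b"
proof (cases "y \<le> mn")
  case True
  then show ?thesis using assms unfolding med_def
  by (smt (verit) min_def max_def order_trans linear order_antisym)
next
  case False
  show ?thesis
  proof (cases "y \<le> mx")
    case True
    then show ?thesis using assms \<open>\<not> y \<le> mn\<close> unfolding med_def
      by (smt (verit) min_def max_def order_trans linear order_antisym)
  next
    case False
    then show ?thesis using assms \<open>\<not> y \<le> mn\<close> unfolding med_def
      by (smt (verit) min_def max_def order_trans linear order_antisym)
  qed
qed

lemma Phi_snoc:
  fixes a b c d y :: "'a::linorder"
  assumes "a \<le> min c d" "max c d \<le> b" "xs \<noteq> []"
  shows "Phi a b c d (xs @ [y]) = Phi a b c d [Phi a b c d xs, y]"
proof -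
  have f: "finite (set xs)" "set xs \<noteq> {}" using assms(3) by auto
  have h: "hd xs \<in> set xs" "last xs \<in> set xs" using assms(3) by auto
  have mn: "Min (set (xs @ [y])) = min (Min (set xs)) y"
    using f by (simp add: Min_insert min.commute)
  have mx: "Max (set (xs @ [y])) = max (Max (set xs)) y"
    using f by (simp add: Max_insert max.commute)
  have "Phi a b c d (xs @ [y]) = med a (max (max (min c (hd xs)) (med (min (Min (set xs)) y) (min c d) (max (Max (set xs)) y))) (min d y)) b"
    unfolding Phi_def mn mx using assms(3) by simp
  also have "\<dots> = Phi a b c d [Phi a b c d xs, y]"
    unfolding Phi_pair
    apply (rule idn)
    using assms f h by (auto simp: Phi_def)
  finally show ?thesis .
qed

lemma Phi_cons:
  fixes a b c d x :: "'a::linorder"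
  assumes "a \<le> min c d" "max c d \<le> b" "ys \<noteq> []"
  shows "Phi a b c d (x # ys) = Phi a b c d [x, Phi a b c d ys]"
proof -
  have a2: "a \<le> min d c" "max d c \<le> b" using assms by (simp_all add: min.commute max.commute)
  have "Phi a b c d (x # ys) = Phi a b d c (rev (x # ys))"
    using Phi_rev[of "x#ys" a b d c] by simp
  also have "\<dots> = Phi a b d c (rev ys @ [x])" by simp
  also have "\<dots> = Phi a b d c [Phi a b d c (rev ys), x]"
    using Phi_snoc[OF a2] assms(3) by simp
  also have "Phi a b d c (rev ys) = Phi a b c d ys"
    using Phi_rev[of "ys" a b d c] assms(3) by simp
  also have "Phi a b d c [Phi a b c d ys, x] = Phi a b c d (rev [Phi a b c d ys, x])"
    using Phi_rev[of "[Phi a b c d ys, x]" a b c d] by simp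
  finally show ?thesis by simp
qed



lemma opt_Some[simp]: "opt_list (Some v) = [v]" and opt_None[simp]: "opt_list None = []"
  by (simp_all add: opt_list_def)

lemma eps_Some: "eps_standard H \<Longrightarrow> xs \<noteq> [] \<Longrightarrow> H xs = Some (the (H xs))"
  unfolding eps_standard_def by auto

lemma assoc_V:
  assumes "eps_standard H" "associative_op H" "xs \<noteq> []"
  shows "H xs = H [the (H xs)]"
proof -
  have "H ([] @ xs @ []) = H ([] @ opt_list (H xs) @ [])"
    using assms(2) unfolding associative_op_def by blast
  then show ?thesis using eps_Some[OF assms(1,3)] by (metis append.left_neutral append_Nil2 opt_Some)
qed

lemma assoc_split:
  assumes "eps_standard H" "associative_op H" "xs \<noteq> []" "ys \<noteq> []"
  shows "H (xs @ ys) = H [the (H xs), the (H ys)]"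
proof -
  have "H ([] @ xs @ ys) = H ([] @ opt_list (H xs) @ ys)"
    using assms(2) unfolding associative_op_def by blast
  also have "\<dots> = H ([the (H xs)] @ ys @ [])"
    using eps_Some[OF assms(1,3)] by (metis append.left_neutral append_Nil2 opt_Some)
  also have "\<dots> = H ([the (H xs)] @ opt_list (H ys) @ [])"
    using assms(2) unfolding associative_op_def by blast
  also have "\<dots> = H [the (H xs), the (H ys)]"
    using eps_Some[OF assms(1,4)] by (metis append_Nil2 opt_Some append_Cons append_Nil)
  finally show ?thesis by simp
qed

lemma assoc_gen:
  fixes H :: "'a list \<Rightarrow> 'a option"
  defines "V \<equiv> \<lambda>xs. the (H xs)"
  defines "F \<equiv> \<lambda>x y. V [x, y]"
  defines "G \<equiv> \<lambda>x. V [x]"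
  assumes eps: "eps_standard H"
    and snocH: "\<And>xs y. xs \<noteq> [] \<Longrightarrow> V (xs @ [y]) = F (V xs) y"
    and gg: "\<And>x. G (G x) = G x"
    and gF: "\<And>x y. G (F x y) = F x y"
    and Fgl: "\<And>x y. F (G x) y = F x y"
    and Fgr: "\<And>x y. F x (G y) = F x y"
    and Fas: "\<And>x y z. F (F x y) z = F x (F y z)"
  shows "associative_op H"
proof -
  have split: "V (xs @ ys) = F (V xs) (V ys)" if "xs \<noteq> []" "ys \<noteq> []" for xs ys
    using that(2)
  proof (induction ys rule: rev_induct)
    case Nil then show ?case by simp
  next
    case (snoc y ys)
    show ?case
    proof (cases "ys = []")
      case True
      then show ?thesis using snocH that(1) Fgr unfolding G_def by simp
    next
      case False
      have "V (xs @ ys @ [y]) = F (V (xs @ ys)) y" using snocH that(1)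
        by (metis append_assoc append_is_Nil_conv)
      also have "\<dots> = F (F (V xs) (V ys)) y" using snoc.IH False by simp
      also have "\<dots> = F (V xs) (F (V ys) y)" by (rule Fas)
      also have "\<dots> = F (V xs) (V (ys @ [y]))" using False by (simp add: snocH)
      finally show ?thesis .
    qed
  qed
  have gV: "G (V xs) = V xs" if "xs \<noteq> []" for xs
    using that
  proof (induction xs rule: rev_induct)
    case Nil then show ?case by simp
  next
    case (snoc y ys)
    show ?case
    proof (cases "ys = []")
      case True then show ?thesis using gg unfolding G_def by simp
    next
      case False then show ?thesis using snocH gF by simp
    qed
  qed
  have VV: "V [V ys] = V ys" if "ys \<noteq> []" for ys using gV[OF that] unfolding G_def .
  show ?thesis unfolding associative_op_def
  proof (intro allI)
    fix xs ys zs :: "'a list"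
    show "H (xs @ ys @ zs) = H (xs @ opt_list (H ys) @ zs)"
    proof (cases "ys = []")
      case True then show ?thesis using eps by (simp add: eps_standard_def)
    next
      case ys: False
      have o: "opt_list (H ys) = [V ys]" using eps_Some[OF eps ys] unfolding V_def by (metis opt_Some)
      have "V (xs @ ys @ zs) = V (xs @ [V ys] @ zs)"
      proof (cases "xs = []")
        case True
        then show ?thesis
        proof (cases "zs = []")
          case True then show ?thesis using \<open>xs = []\<close> VV[OF ys] by simp
        next
          case False
          then show ?thesis using \<open>xs = []\<close> split[OF ys False] split[of "[V ys]" zs] VV[OF ys] by simp
        qed
      next
        case xs: False
        then show ?thesis
        proof (cases "zs = []")
          case True then show ?thesis using split[OF xs ys] split[of xs "[V ys]"] xs VV[OF ys] by simp
        next
          case False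
          then show ?thesis using split[OF xs, of "ys @ zs"] split[OF ys False]
             split[OF xs, of "[V ys] @ zs"] split[of "[V ys]" zs] VV[OF ys] by simp
        qed
      qed
      then show ?thesis unfolding o V_def using eps_Some[OF eps] ys
        by (metis Nil_is_append_conv not_Cons_self2 append_Cons append_Nil)
    qed
  qed
qed

lemma convex_image:
  fixes g :: "'a::{linorder,order_bot,order_top} \<Rightarrow> 'a"
  assumes mono: "\<And>x y. x \<le> y \<Longrightarrow> g x \<le> g y"
    and R: "\<And>t. g bot \<le> t \<Longrightarrow> t \<le> g top \<Longrightarrow> g t = t"
    and S: "chain_convex S"
  shows "chain_convex (g ` S)"
  unfolding chain_convex_def
proof (intro ballI allI impI)
  fix s s' t assume s: "s \<in> g ` S" and s': "s' \<in> g ` S" and st: "s < t \<and> t < s'"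
  obtain x where x: "x \<in> S" "s = g x" using s by auto
  obtain x' where x': "x' \<in> S" "s' = g x'" using s' by auto
  have "g bot \<le> s" using x mono by simp
  moreover have "s' \<le> g top" using x' mono by simp
  ultimately have "g bot \<le> t" "t \<le> g top" using st by auto
  then have gt: "g t = t" using R by simp
  have "x \<le> t"
  proof (rule ccontr)
    assume "\<not> x \<le> t" then have "t \<le> x" by simp
    then have "g t \<le> g x" by (rule mono)
    then show False using gt x st by (metis leD)
  qed
  moreover have "t \<le> x'"
  proof (rule ccontr)
    assume "\<not> t \<le> x'" then have "x' \<le> t" by simp
    then have "g x' \<le> g t" by (rule mono)
    then show False using gt x' st by (metis leD)
  qed
  ultimately have "t \<in> S"
    using S x x' unfolding chain_convex_def by (metis order.order_iff_strict)
  then show "t \<in> g ` S" using gt by (metis image_eqI)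
qed

lemma bin_char:
  fixes F :: "'a::linorder \<Rightarrow> 'a \<Rightarrow> 'a" and a b :: 'a
  assumes ab: "a \<le> b"
    and monoL: "\<And>x x' y. x \<le> x' \<Longrightarrow> F x y \<le> F x' y"
    and monoR: "\<And>x y y'. y \<le> y' \<Longrightarrow> F x y \<le> F x y'"
    and closed: "\<And>x y. a \<le> F x y \<and> F x y \<le> b"
    and assoc: "\<And>x y z. F (F x y) z = F x (F y z)"
    and idem: "\<And>x. a \<le> x \<Longrightarrow> x \<le> b \<Longrightarrow> F x x = x"
    and cvL: "\<And>t. a \<le> t \<Longrightarrow> t \<le> F a b \<Longrightarrow> \<exists>y. F a y = t"
    and cvR: "\<And>t. F a b \<le> t \<Longrightarrow> t \<le> b \<Longrightarrow> \<exists>x. F x b = t"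
    and u: "a \<le> u" "u \<le> v" "v \<le> b"
  shows "F u v = med u (F a b) v"
proof -
  define d where "d = F a b"
  have ad: "a \<le> d" "d \<le> b" using closed d_def by auto
  have L1: "F a y = y" if ay: "a \<le> y" "y \<le> d" for y
  proof -
    obtain t where t: "F a t = y" using cvL ay d_def by auto
    have "F a y = F (F a a) t" using t assoc by simp
    also have "\<dots> = y" using idem[of a] ab t by simp
    finally show ?thesis .
  qed
  have R1: "F x b = x" if xb: "d \<le> x" "x \<le> b" for x
  proof -
    obtain t where t: "F t b = x" using cvR xb d_def by auto
    have "F x b = F t (F b b)" using t assoc by metis
    also have "\<dots> = x" using idem[of b] ab t by simp
    finally show ?thesis .
  qed
  show ?thesis
  proof (cases "v \<le> d")
    case True
    have "F a v = v" using L1 True u by simp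
    then have "v \<le> F u v" using monoL[of a u v] u by simp
    moreover have "F u v \<le> v" using monoL[of u v v] idem[of v] u ab by simp
    ultimately show ?thesis using True u unfolding d_def[symmetric] med_def by (auto simp: min_def max_def)
  next
    case nv: False
    show ?thesis
    proof (cases "d \<le> u")
      case True
      have "F u b = u" using R1 True u by simp
      then have "F u v \<le> u" using monoR[of v b u] u by simp
      moreover have "u \<le> F u v" using monoR[of u v u] idem[of u] u ab by simp
      ultimately show ?thesis using True u unfolding d_def[symmetric] med_def by (auto simp: min_def max_def)
    next
      case False
      have "F a u = u" using L1 False u by simp
      then have "F u v = F a (F u v)" using assoc by metis
      also have "\<dots> \<le> d" unfolding d_def using monoR closed by blast
      finally have 1: "F u v \<le> d" .
      have "F v b = v" using R1 nv u by simp
      then have "F u v = F (F u v) b" using assoc by metis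
      moreover have "d \<le> F (F u v) b" unfolding d_def using monoL closed by blast
      ultimately have 2: "d \<le> F u v" by simp
      show ?thesis using 1 2 False nv u unfolding d_def[symmetric] med_def by (auto simp: min_def max_def)
    qed
  qed
qed



lemma nondecrD: "nondecr_n H n \<Longrightarrow> length ys + 1 + length zs = n \<Longrightarrow> x \<le> x' \<Longrightarrow>
   the (H (ys @ [x] @ zs)) \<le> the (H (ys @ [x'] @ zs))"
  unfolding nondecr_n_def by blast

lemma cvx_mem: "chain_convex S \<Longrightarrow> s \<in> S \<Longrightarrow> s' \<in> S \<Longrightarrow> s \<le> t \<Longrightarrow> t \<le> s' \<Longrightarrow> t \<in> S"
  unfolding chain_convex_def by (metis order.order_iff_strict)

lemma i_iii:
  fixes H :: "'a::{linorder, order_bot, order_top} list \<Rightarrow> 'a option"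
  assumes eps: "eps_standard H" and A: "associative_op H"
    and B: "\<forall>x. H (opt_list (H [x]) @ opt_list (H [x])) = H [x]"
    and M1: "nondecr_n H 1" and M2: "nondecr_n H 2"
    and C0: "chain_convex {the (H [x]) | x. True}"
    and C: "\<forall>z. chain_convex {the (H [x, z]) | x. True} \<and> chain_convex {the (H [z, x]) | x. True}"
  shows "\<exists>a b c d. a \<le> min c d \<and> max c d \<le> b \<and>
             (\<forall>n\<ge>1. \<forall>xs. length xs = n \<longrightarrow> H xs = Some (Phi a b c d xs))"
proof -
  define V where "V xs = the (H xs)" for xs
  define G where "G x = V [x]" for x
  define F where "F x y = V [x, y]" for x y
  have HV: "H xs = Some (V xs)" if "xs \<noteq> []" for xs using eps_Some[OF eps that] V_def by simp
  have Gm: "G x \<le> G x'" if "x \<le> x'" for x x'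
    using nondecrD[OF M1, of "[]" "[]" x x'] that unfolding G_def V_def by simp
  have FmL: "F x y \<le> F x' y" if "x \<le> x'" for x x' y
    using nondecrD[OF M2, of "[]" "[y]" x x'] that unfolding F_def V_def by simp
  have FmR: "F y x \<le> F y x'" if "x \<le> x'" for x x' y
    using nondecrD[OF M2, of "[y]" "[]" x x'] that unfolding F_def V_def by simp
  have GG: "G (G x) = G x" for x
    using assoc_V[OF eps A, of "[x]"] unfolding G_def V_def by simp
  have Fs: "F x y = F (G x) (G y)" for x y
    using assoc_split[OF eps A, of "[x]" "[y]"] unfolding F_def G_def V_def by simp
  have FG: "G (F x y) = F x y" for x y
    using assoc_V[OF eps A, of "[x,y]"] unfolding F_def G_def V_def by simp
  have Fgl: "F (G x) y = F x y" for x y using Fs[of "G x" y] Fs[of x y] GG by simp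
  have Fgr: "F x (G y) = F x y" for x y using Fs[of x "G y"] Fs[of x y] GG by simp
  have Fas: "F (F x y) z = F x (F y z)" for x y z
  proof -
    have "V ([x,y] @ [z]) = F (F x y) (G z)"
      using assoc_split[OF eps A, of "[x,y]" "[z]"] unfolding F_def G_def V_def by simp
    moreover have "V ([x] @ [y,z]) = F (G x) (F y z)"
      using assoc_split[OF eps A, of "[x]" "[y,z]"] unfolding F_def G_def V_def by simp
    ultimately show ?thesis using Fgl Fgr by simp
  qed
  have Vsnoc: "V (xs @ [y]) = F (V xs) y" if "xs \<noteq> []" for xs y
    using assoc_split[OF eps A that, of "[y]"] Fgr unfolding F_def G_def V_def by simp
  define a where "a = G bot"
  define b where "b = G top"
  have ab: "a \<le> b" unfolding a_def b_def using Gm by simp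
  have Gab: "a \<le> G x \<and> G x \<le> b" for x unfolding a_def b_def using Gm by simp
  have Gid: "G t = t" if "a \<le> t" "t \<le> b" for t
  proof -
    have "t \<in> {the (H [x]) | x. True}"
      by (rule cvx_mem[OF C0, where s=a and s'=b]) (use that in \<open>auto simp: a_def b_def G_def V_def\<close>)
    then obtain s where "t = G s" unfolding G_def V_def by auto
    then show ?thesis using GG by simp
  qed
  have Gmed: "G x = med a x b" for x
  proof (cases "x \<le> a")
    case True
    then have "G x \<le> a" using Gm[OF True] Gid[of a] ab by simp
    then show ?thesis using Gab[of x] True ab unfolding med_def by (auto simp: min_def max_def)
  next
    case na: False
    show ?thesis
    proof (cases "b \<le> x")
      case True
      then have "b \<le> G x" using Gm[OF True] Gid[of b] ab by simp
      then show ?thesis using Gab[of x] True ab unfolding med_def by (auto simp: min_def max_def)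
    next
      case False
      then show ?thesis using na Gid[of x] unfolding med_def by (auto simp: min_def max_def)
    qed
  qed
  have idem: "F u u = u" if "a \<le> u" "u \<le> b" for u
  proof -
    have 1: "H (opt_list (H [u]) @ opt_list (H [u])) = H [u]" using B by blast
    have "H [G u, G u] = H [u]" using 1 unfolding HV[of "[u]", simplified] G_def by simp
    then show ?thesis using Gid[OF that] unfolding F_def G_def V_def by simp
  qed
  have closed: "a \<le> F x y \<and> F x y \<le> b" for x y using Gab[of "F x y"] FG by simp
  define c where "c = F b a"
  define d where "d = F a b"
  have SL: "t \<in> {the (H [z, x]) | x. True}" if "F z u \<le> t" "t \<le> F z v" for z u v t
    by (rule cvx_mem[where s="F z u" and s'="F z v"]) (use C that in \<open>auto simp: F_def V_def\<close>)
  have SR: "t \<in> {the (H [x, z]) | x. True}" if "F u z \<le> t" "t \<le> F v z" for z u v t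
    by (rule cvx_mem[where s="F u z" and s'="F v z"]) (use C that in \<open>auto simp: F_def V_def\<close>)
  have cvL: "\<exists>y. F a y = t" if "a \<le> t" "t \<le> F a b" for t
    using SL[of a a t b] that idem[of a] ab unfolding F_def V_def by auto
  have cvR: "\<exists>x. F x b = t" if "F a b \<le> t" "t \<le> b" for t
    using SR[of a b t b] that idem[of b] ab unfolding F_def V_def by auto
  have cvL': "\<exists>y. F y a = t" if "a \<le> t" "t \<le> F b a" for t
    using SR[of a a t b] that idem[of a] ab unfolding F_def V_def by auto
  have cvR': "\<exists>x. F b x = t" if "F b a \<le> t" "t \<le> b" for t
    using SL[of b a t b] that idem[of b] ab unfolding F_def V_def by auto
  have K1: "F u v = med u d v" if "a \<le> u" "u \<le> v" "v \<le> b" for u v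
    unfolding d_def
    by (rule bin_char[OF ab FmL FmR closed Fas idem cvL cvR that])
  have K2: "F v u = med u c v" if "a \<le> u" "u \<le> v" "v \<le> b" for u v
  proof -
    have "(\<lambda>x y. F y x) u v = med u ((\<lambda>x y. F y x) a b) v"
      by (rule bin_char[of a b "\<lambda>x y. F y x"])
         (use ab FmL FmR closed Fas idem cvL' cvR' that in auto)
    then show ?thesis unfolding c_def by simp
  qed
  have cd: "a \<le> min c d" "max c d \<le> b" using closed unfolding c_def d_def by auto
  have FP: "F x y = Phi a b c d [x, y]" for x y
  proof -
    define u where "u = med a x b"
    define v where "v = med a y b"
    have uv: "a \<le> u" "u \<le> b" "a \<le> v" "v \<le> b" using Gab Gmed u_def v_def by metis+
    have "F x y = F u v" using Fs Gmed u_def v_def by simp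
    also have "\<dots> = (if u \<le> v then med u d v else med v c u)"
      using K1[of u v] K2[of v u] uv by auto
    finally show ?thesis using Phi_closed[OF cd, of x y] u_def v_def by (simp add: Let_def)
  qed
  have VP: "V xs = Phi a b c d xs" if "xs \<noteq> []" for xs
    using that
  proof (induction xs rule: rev_induct)
    case Nil then show ?case by simp
  next
    case (snoc y ys)
    show ?case
    proof (cases "ys = []")
      case True then show ?thesis using Gmed unfolding G_def by simp
    next
      case False
      then show ?thesis using Vsnoc[OF False] snoc.IH FP Phi_snoc[OF cd False] by simp
    qed
  qed
  have "\<forall>n\<ge>1. \<forall>xs. length xs = n \<longrightarrow> H xs = Some (Phi a b c d xs)"
  proof (intro allI impI)
    fix n :: nat and xs :: "'a list" assume "1 \<le> n" "length xs = n"
    then have "xs \<noteq> []" by auto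
    then show "H xs = Some (Phi a b c d xs)" using VP HV by simp
  qed
  then show ?thesis using cd by blast
qed



lemma Phi_G: "a \<le> b \<Longrightarrow> med a (Phi a b c d xs) b = Phi a b c d xs"
  unfolding Phi_def by (rule med_idem)

lemma Phi_rep: "k \<ge> 1 \<Longrightarrow> Phi a b c d (replicate k v) = med a v b"
  by (simp add: Phi_def hd_replicate last_replicate)

lemma med_mono: "x \<le> x' \<Longrightarrow> y \<le> y' \<Longrightarrow> z \<le> z' \<Longrightarrow> med x y z \<le> med x' y' (z'::'a::linorder)"
  unfolding med_def by (intro min.mono max.mono)

lemma Phi_mono:
  fixes x x' :: "'a::linorder"
  assumes "x \<le> x'"
  shows "Phi a b c d (ys @ [x] @ zs) \<le> Phi a b c d (ys @ [x'] @ zs)"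
proof -
  have h: "hd (ys @ [x] @ zs) \<le> hd (ys @ [x'] @ zs)" using assms by (cases ys) auto
  have l: "last (ys @ [x] @ zs) \<le> last (ys @ [x'] @ zs)" using assms by (cases zs rule: rev_cases) auto
  have mn: "Min (set (ys @ [x] @ zs)) \<le> Min (set (ys @ [x'] @ zs))"
  proof -
    have "Min (set (ys @ [x] @ zs)) \<le> y" if "y \<in> set (ys @ [x'] @ zs)" for y
    proof (cases "y = x'")
      case True
      have "Min (set (ys @ [x] @ zs)) \<le> x" by simp
      then show ?thesis using True assms by (meson order.trans)
    next
      case False then show ?thesis using that by simp
    qed
    then show ?thesis by simp
  qed
  have mx: "Max (set (ys @ [x] @ zs)) \<le> Max (set (ys @ [x'] @ zs))"
  proof -
    have "y \<le> Max (set (ys @ [x'] @ zs))" if "y \<in> set (ys @ [x] @ zs)" for y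
    proof (cases "y = x")
      case True
      have "x' \<le> Max (set (ys @ [x'] @ zs))" by simp
      then show ?thesis using True assms by (meson order.trans)
    next
      case False then show ?thesis using that by simp
    qed
    then show ?thesis by simp
  qed
  show ?thesis unfolding Phi_def
    by (intro med_mono max.mono min.mono order_refl h l mn mx)
qed

lemma range_eq: "(\<And>x. f x = g x) \<Longrightarrow> {f x | x. True} = range g"
  by auto

lemma cvx_univ: "chain_convex UNIV" by (simp add: chain_convex_def)

lemma iii_ii:
  fixes H :: "'a::{linorder, order_bot, order_top} list \<Rightarrow> 'a option"
  assumes eps: "eps_standard H" and cd: "a \<le> min c d" "max c d \<le> b"
    and P: "\<forall>n\<ge>1. \<forall>xs. length xs = n \<longrightarrow> H xs = Some (Phi a b c d xs)"
  shows "associative_op H \<and> range_idempotent H \<and> (\<forall>n\<ge>1. nondecr_n H n)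
           \<and> (\<forall>ys zs. chain_convex {the (H (ys @ [x] @ zs)) | x. True})"
proof -
  have HP: "H xs = Some (Phi a b c d xs)" if "xs \<noteq> []" for xs
    using P that by (metis One_nat_def Suc_leI length_greater_0_conv)
  have VP: "the (H xs) = Phi a b c d xs" if "xs \<noteq> []" for xs using HP[OF that] by simp
  have ab: "a \<le> b" using cd by (meson order.trans min.cobounded1 max.cobounded1)
  have A: "associative_op H"
    apply (rule assoc_gen[OF eps])
    subgoal for xs y using Phi_snoc[OF cd, of xs y] by (simp add: VP)
    subgoal for x using med_idem[OF ab] by (simp add: VP)
    subgoal for x y using Phi_G[OF ab] by (simp add: VP)
    subgoal for x y using Phi_gl[OF cd] by (simp add: VP)
    subgoal for x y using Phi_gr[OF cd] by (simp add: VP)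
    subgoal for x y z using Phi_snoc[OF cd, of "[x,y]" z] Phi_cons[OF cd, of "[y,z]" x] by (simp add: VP)
    done
  have RI: "range_idempotent H"
    unfolding range_idempotent_def
  proof (intro ballI allI impI)
    fix v k assume v: "v \<in> {v. \<exists>xs. xs \<noteq> [] \<and> H xs = Some v}" and k: "(1::nat) \<le> k"
    then obtain xs where xs: "xs \<noteq> []" "H xs = Some v" by auto
    have "v = Phi a b c d xs" using xs HP by simp
    then have "med a v b = v" using Phi_G[OF ab] by simp
    moreover have "replicate k v \<noteq> []" using k by auto
    moreover have "Phi a b c d (replicate k v) = med a v b" by (rule Phi_rep[OF k])
    ultimately show "H (replicate k v) = Some v" using HP[of "replicate k v"] by simp
  qed
  have ND: "\<forall>n\<ge>1. nondecr_n H n"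
    unfolding nondecr_n_def
  proof (intro allI impI)
    fix n ys zs and x x' :: 'a assume "x \<le> x'"
    then show "the (H (ys @ [x] @ zs)) \<le> the (H (ys @ [x'] @ zs))"
      using Phi_mono[of x x' a b c d ys zs] by (simp add: VP)
  qed
  have monoL: "Phi a b c d [p, s] \<le> Phi a b c d [p, s']" if "s \<le> s'" for p s s'
    using Phi_mono[OF that, of a b c d "[p]" "[]"] by simp
  have monoR: "Phi a b c d [s, q] \<le> Phi a b c d [s', q]" if "s \<le> s'" for q s s'
    using Phi_mono[OF that, of a b c d "[]" "[q]"] by simp
  have cvL: "chain_convex ((\<lambda>s. Phi a b c d [p, s]) ` S)" if "chain_convex S" for p S
    by (rule convex_image[OF _ _ that]) (use monoL Phi_RR[OF cd] in auto)
  have cvR: "chain_convex ((\<lambda>s. Phi a b c d [s, q]) ` S)" if "chain_convex S" for q S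
    by (rule convex_image[OF _ _ that]) (use monoR Phi_RL[OF cd] in auto)
  have cv0: "chain_convex ((\<lambda>s. med a s b) ` UNIV)"
    apply (rule convex_image[OF _ _ cvx_univ])
     apply (simp add: med_mono)
    subgoal for t
    proof -
      assume h: "med a bot b \<le> t" "t \<le> med a top b"
      have "min bot b = bot" "min top b = b" by (simp_all add: min_def top.extremum_unique)
      then have "a \<le> t" "t \<le> b" using h ab unfolding med_clamp[OF ab] by (simp_all add: max_def bot.extremum_unique split: if_splits)
      then show ?thesis unfolding med_clamp[OF ab] by (simp add: min_def max_def)
    qed
    done
  have CV: "chain_convex {the (H (ys @ [x] @ zs)) | x. True}" for ys zs
  proof (cases "ys = []")
    case ys: True
    show ?thesis
    proof (cases "zs = []")
      case True
      have "{the (H (ys @ [x] @ zs)) | x. True} = range (\<lambda>s. med a s b)"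
        by (rule range_eq) (simp add: ys True VP)
      then show ?thesis using cv0 by simp
    next
      case False
      have "{the (H (ys @ [x] @ zs)) | x. True} = range (\<lambda>s. Phi a b c d [s, Phi a b c d zs])"
        by (rule range_eq) (simp add: ys VP Phi_cons[OF cd False])
      then show ?thesis using cvR[OF cvx_univ] by simp
    qed
  next
    case ys: False
    show ?thesis
    proof (cases "zs = []")
      case True
      have "{the (H (ys @ [x] @ zs)) | x. True} = range (\<lambda>s. Phi a b c d [Phi a b c d ys, s])"
        by (rule range_eq) (simp add: ys True VP Phi_snoc[OF cd ys])
      then show ?thesis using cvL[OF cvx_univ] by simp
    next
      case False
      have e: "the (H (ys @ [x] @ zs)) = Phi a b c d [Phi a b c d ys, Phi a b c d [x, Phi a b c d zs]]" for x
      proof -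
        have "H (ys @ ([x] @ zs)) = H [the (H ys), the (H ([x] @ zs))]"
          by (rule assoc_split[OF eps A ys]) simp
        then show ?thesis using ys False by (simp add: VP Phi_cons[OF cd False])
      qed
      have "{the (H (ys @ [x] @ zs)) | x. True} =
         range (\<lambda>x. Phi a b c d [Phi a b c d ys, Phi a b c d [x, Phi a b c d zs]])"
        by (rule range_eq) (rule e)
      then show ?thesis using cvL[OF cvR[OF cvx_univ]] by (simp add: image_image)
    qed
  qed
  show ?thesis using A RI ND CV by blast
qed


lemma ii_i:
  fixes H :: "'a::{linorder, order_bot, order_top} list \<Rightarrow> 'a option"
  assumes eps: "eps_standard H" and A: "associative_op H" and RI: "range_idempotent H"
    and ND: "\<forall>n\<ge>1. nondecr_n H n"
    and CV: "\<forall>ys zs. chain_convex {the (H (ys @ [x] @ zs)) | x. True}"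
  shows "associative_op H
           \<and> (\<forall>x. H (opt_list (H [x]) @ opt_list (H [x])) = H [x])
           \<and> nondecr_n H 1 \<and> nondecr_n H 2
           \<and> chain_convex {the (H [x]) | x. True}
           \<and> (\<forall>z. chain_convex {the (H [x, z]) | x. True}
                 \<and> chain_convex {the (H [z, x]) | x. True})"
proof -
  have B: "H (opt_list (H [x]) @ opt_list (H [x])) = H [x]" for x
  proof -
    have hx: "H [x] = Some (the (H [x]))" by (rule eps_Some[OF eps]) simp
    have "the (H [x]) \<in> {v. \<exists>xs. xs \<noteq> [] \<and> H xs = Some v}" using hx by blast
    then have "H (replicate 2 (the (H [x]))) = Some (the (H [x]))"
      using RI unfolding range_idempotent_def by auto
    moreover have "replicate 2 (the (H [x])) = [the (H [x]), the (H [x])]" by (simp add: numeral_2_eq_2)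
    ultimately show ?thesis using hx by (metis opt_Some append_Cons append_Nil)
  qed
  have C0: "chain_convex {the (H [x]) | x. True}" using CV[rule_format, of "[]" "[]"] by simp
  have C1: "chain_convex {the (H [x, z]) | x. True}" for z using CV[rule_format, of "[]" "[z]"] by simp
  have C2: "chain_convex {the (H [z, x]) | x. True}" for z using CV[rule_format, of "[z]" "[]"] by simp
  show ?thesis using A B ND C0 C1 C2 by auto
qed

theorem proposition5p7:
  fixes H :: "'a::{linorder, order_bot, order_top} list \<Rightarrow> 'a option"
  assumes "eps_standard H"
  shows "((associative_op H
           \<and> (\<forall>x. H (opt_list (H [x]) @ opt_list (H [x])) = H [x])
           \<and> nondecr_n H 1 \<and> nondecr_n H 2
           \<and> chain_convex {the (H [x]) | x. True}
           \<and> (\<forall>z. chain_convex {the (H [x, z]) | x. True}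
                 \<and> chain_convex {the (H [z, x]) | x. True}))
          \<longleftrightarrow>
          (associative_op H \<and> range_idempotent H
           \<and> (\<forall>n\<ge>1. nondecr_n H n)
           \<and> (\<forall>ys zs. chain_convex {the (H (ys @ [x] @ zs)) | x. True}))) \<and>
         ((associative_op H \<and> range_idempotent H
           \<and> (\<forall>n\<ge>1. nondecr_n H n)
           \<and> (\<forall>ys zs. chain_convex {the (H (ys @ [x] @ zs)) | x. True}))
          \<longleftrightarrow>
          (\<exists>a b c d. a \<le> min c d \<and> max c d \<le> b \<and>
             (\<forall>n\<ge>1. \<forall>xs. length xs = n \<longrightarrow>
                H xs = Some (med a
                  (max (max (min c (hd xs)) (med (Min (set xs)) (min c d) (Max (set xs))))
                       (min d (last xs))) b))))"
proof -
  let ?P1 = "associative_op H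
           \<and> (\<forall>x. H (opt_list (H [x]) @ opt_list (H [x])) = H [x])
           \<and> nondecr_n H 1 \<and> nondecr_n H 2
           \<and> chain_convex {the (H [x]) | x. True}
           \<and> (\<forall>z. chain_convex {the (H [x, z]) | x. True}
                 \<and> chain_convex {the (H [z, x]) | x. True})"
  let ?P2 = "associative_op H \<and> range_idempotent H
           \<and> (\<forall>n\<ge>1. nondecr_n H n)
           \<and> (\<forall>ys zs. chain_convex {the (H (ys @ [x] @ zs)) | x. True})"
  let ?P3 = "\<exists>a b c d. a \<le> min c d \<and> max c d \<le> b \<and>
             (\<forall>n\<ge>1. \<forall>xs. length xs = n \<longrightarrow> H xs = Some (Phi a b c d xs))"
  have 21: "?P2 \<Longrightarrow> ?P1" using ii_i[OF assms] by blast
  have 13: "?P1 \<Longrightarrow> ?P3" using i_iii[OF assms] by blast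
  have 32: "?P3 \<Longrightarrow> ?P2" using iii_ii[OF assms] by blast
  have "(?P1 \<longleftrightarrow> ?P2) \<and> (?P2 \<longleftrightarrow> ?P3)" using 21 13 32 by blast
  then show ?thesis unfolding Phi_def .
qed

end
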